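(* Let $X$ be a Tychonoff space with $|X|>1$. Then $\mathrm{Rad}(\mathbb{AG}(X))=1$ if $|X|=2$; $\mathrm{Rad}(\mathbb{AG}(X))=2$ if $|X|>2$ and $X$ has an isolated point; and $\mathrm{Rad}(\mathbb{AG}(X))=3$ if $|X|>2$ and $X$ has no isolated point.
   Context: $C(X)$ is the ring of real-valued continuous functions on $X$. $\mathbb{A}(X)$ is the set of nonzero ideals $I$ of $C(X)$ for which there is a nonzero ideal $J$ with $IJ=\{0\}$; $\mathbb{AG}(X)$ has vertex set $\mathbb{A}(X)$, distinct $I,J$ adjacent iff $IJ=\{0\}$. The eccentricity of a vertex is the maximum distance from it to other vertices, and the radius $\mathrm{Rad}$ is the minimum eccentricity over all vertices. *)

theory Defs
  imports "HOL-Analysis.Analysis" "HOL-Library.Extended_Nat"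
begin

definition tychonoff_space :: "'a topology \<Rightarrow> bool" where
  "tychonoff_space X \<longleftrightarrow> completely_regular_space X \<and> t1_space X"

text \<open>The ring C(X) of real-valued continuous functions on X; functions are
  normalised to be 0 outside the topological space so that equality of
  elements is equality on X.\<close>
definition CX :: "'a topology \<Rightarrow> ('a \<Rightarrow> real) set" where
  "CX X = {f. continuous_map X euclideanreal f \<and> (\<forall>x. x \<notin> topspace X \<longrightarrow> f x = 0)}"

definition is_ideal_CX :: "'a topology \<Rightarrow> ('a \<Rightarrow> real) set \<Rightarrow> bool" where
  "is_ideal_CX X I \<longleftrightarrow> I \<subseteq> CX X \<and> (\<lambda>x. 0) \<in> I \<and>
     (\<forall>f\<in>I. \<forall>g\<in>I. (\<lambda>x. f x + g x) \<in> I) \<and>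
     (\<forall>f\<in>I. (\<lambda>x. - f x) \<in> I) \<and>
     (\<forall>f\<in>I. \<forall>h\<in>CX X. (\<lambda>x. h x * f x) \<in> I)"

definition ideal_prod :: "('a \<Rightarrow> real) set \<Rightarrow> ('a \<Rightarrow> real) set \<Rightarrow> ('a \<Rightarrow> real) set" where
  "ideal_prod I J = {f. \<exists>(n::nat) fs gs. (\<forall>i<n. fs i \<in> I \<and> gs i \<in> J) \<and>
                         f = (\<lambda>x. \<Sum>i<n. fs i x * gs i x)}"

definition nonzero_ideal :: "'a topology \<Rightarrow> ('a \<Rightarrow> real) set \<Rightarrow> bool" where
  "nonzero_ideal X I \<longleftrightarrow> is_ideal_CX X I \<and> I \<noteq> {\<lambda>x. 0}"

definition AX :: "'a topology \<Rightarrow> ('a \<Rightarrow> real) set set" where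
  "AX X = {I. nonzero_ideal X I \<and> (\<exists>J. nonzero_ideal X J \<and> ideal_prod I J = {\<lambda>x. 0})}"

definition AG_adj :: "'a topology \<Rightarrow> ('a \<Rightarrow> real) set \<Rightarrow> ('a \<Rightarrow> real) set \<Rightarrow> bool" where
  "AG_adj X I J \<longleftrightarrow> I \<in> AX X \<and> J \<in> AX X \<and> I \<noteq> J \<and> ideal_prod I J = {\<lambda>x. 0}"

text \<open>Graph distance (infinity if no path).\<close>
definition AG_dist :: "'a topology \<Rightarrow> ('a \<Rightarrow> real) set \<Rightarrow> ('a \<Rightarrow> real) set \<Rightarrow> enat" where
  "AG_dist X I J = Inf {enat n | n. \<exists>p :: nat \<Rightarrow> ('a \<Rightarrow> real) set.
      p 0 = I \<and> p n = J \<and> (\<forall>i<n. AG_adj X (p i) (p (Suc i)))}"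

definition AG_ecc :: "'a topology \<Rightarrow> ('a \<Rightarrow> real) set \<Rightarrow> enat" where
  "AG_ecc X I = (SUP J\<in>AX X. AG_dist X I J)"

definition AG_rad :: "'a topology \<Rightarrow> enat" where
  "AG_rad X = (INF I\<in>AX X. AG_ecc X I)"

end

theory Submission
  imports Defs
begin

definition coz :: "('a \<Rightarrow> real) set \<Rightarrow> 'a set" where
  "coz I = {x. \<exists>f\<in>I. f x \<noteq> 0}"

definition Oid :: "'a topology \<Rightarrow> 'a set \<Rightarrow> ('a \<Rightarrow> real) set" where
  "Oid X V = {f \<in> CX X. \<forall>x. f x \<noteq> 0 \<longrightarrow> x \<in> V}"

lemma ty_cr: "tychonoff_space X \<Longrightarrow> completely_regular_space X" by (simp add: tychonoff_space_def)
lemma ty_t1: "tychonoff_space X \<Longrightarrow> t1_space X" by (simp add: tychonoff_space_def)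

lemma prod_zero_iff: fixes I J :: "('a \<Rightarrow> real) set" shows "ideal_prod I J = {\<lambda>x. 0} \<longleftrightarrow> coz I \<inter> coz J = {}"
proof
  assume h: "ideal_prod I J = {\<lambda>x. 0}"
  have "f x * g x = 0" if "f \<in> I" "g \<in> J" for f g x
  proof -
    have "(\<lambda>x. f x * g x) \<in> ideal_prod I J"
      unfolding ideal_prod_def
      by (rule CollectI, rule exI[of _ 1], rule exI[of _ "\<lambda>i. f"], rule exI[of _ "\<lambda>i. g"]) (use that in auto)
    then show ?thesis using h by (metis singletonD)
  qed
  then show "coz I \<inter> coz J = {}" unfolding coz_def by auto
next
  assume h: "coz I \<inter> coz J = {}"
  have z: "f x * g x = 0" if "f \<in> I" "g \<in> J" for f g x
    using h that unfolding coz_def by auto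
  show "ideal_prod I J = {\<lambda>x. 0}"
  proof (intro equalityI subsetI)
    fix f :: "'a \<Rightarrow> real" assume "f \<in> ideal_prod I J"
    then obtain n :: nat and fs gs :: "nat \<Rightarrow> 'a \<Rightarrow> real" where "\<forall>i<n. fs i \<in> I \<and> gs i \<in> J" "f = (\<lambda>x. \<Sum>i<n. fs i x * gs i x)"
      unfolding ideal_prod_def by auto
    then have "f = (\<lambda>x. 0)" using z by (auto intro!: sum.neutral)
    then show "f \<in> {\<lambda>x. 0}" by simp
  next
    fix f :: "'a \<Rightarrow> real" assume "f \<in> {\<lambda>x. 0::real}"
    then show "f \<in> ideal_prod I J" unfolding ideal_prod_def
      by (intro CollectI exI[of _ 0]) auto
  qed
qed

lemma nonzero_iff: "nonzero_ideal X I \<longleftrightarrow> is_ideal_CX X I \<and> coz I \<noteq> {}"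
proof -
  have "I \<noteq> {\<lambda>x. 0} \<longleftrightarrow> coz I \<noteq> {}" if z: "(\<lambda>x. 0) \<in> I"
  proof
    assume "I \<noteq> {\<lambda>x. 0}"
    then obtain f where f: "f \<in> I" "f \<noteq> (\<lambda>x. 0)" using z by blast
    then obtain x where "f x \<noteq> 0" using ext[of f "\<lambda>x. 0"] by blast
    then show "coz I \<noteq> {}" unfolding coz_def using f by blast
  next
    assume "coz I \<noteq> {}"
    then obtain x f where "f \<in> I" "f x \<noteq> 0" unfolding coz_def by blast
    then show "I \<noteq> {\<lambda>x. 0}" by auto
  qed
  then show ?thesis unfolding nonzero_ideal_def is_ideal_CX_def by blast
qed

lemma CX_zero_out: "f \<in> CX X \<Longrightarrow> x \<notin> topspace X \<Longrightarrow> f x = 0"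
  unfolding CX_def mem_Collect_eq by blast

lemma coz_sub: assumes "I \<subseteq> CX X" shows "coz I \<subseteq> topspace X"
proof
  fix x assume "x \<in> coz I"
  then obtain f where f: "f \<in> I" "f x \<noteq> 0" unfolding coz_def by blast
  show "x \<in> topspace X"
  proof (rule ccontr)
    assume "x \<notin> topspace X"
    then have "f x = 0" using CX_zero_out[of f X x] f(1) assms by blast
    then show False using f(2) by simp
  qed
qed

lemma coz_open: assumes "I \<subseteq> CX X" shows "openin X (coz I)"
proof -
  have eq: "coz I = \<Union>((\<lambda>f. {x \<in> topspace X. f x \<in> -{0}}) ` I)"
  proof (rule equalityI; rule subsetI)
    fix x assume "x \<in> coz I"
    then obtain f where f: "f \<in> I" "f x \<noteq> 0" unfolding coz_def by blast
    have "x \<in> topspace X" using coz_sub[OF assms] \<open>x \<in> coz I\<close> by blast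
    then show "x \<in> \<Union>((\<lambda>f. {x \<in> topspace X. f x \<in> -{0}}) ` I)" using f by blast
  next
    fix x assume "x \<in> \<Union>((\<lambda>f. {x \<in> topspace X. f x \<in> -{0}}) ` I)"
    then show "x \<in> coz I" unfolding coz_def by blast
  qed
  have "openin X {x \<in> topspace X. f x \<in> -{0}}" if "f \<in> I" for f
  proof (rule openin_continuous_map_preimage)
    show "continuous_map X euclideanreal f" using that assms unfolding CX_def by blast
    show "openin euclideanreal (- {0::real})" by (simp add: open_Compl)
  qed
  then have "openin X (\<Union>((\<lambda>f. {x \<in> topspace X. f x \<in> -{0}}) ` I))"
    by (intro openin_Union) auto
  then show ?thesis using eq by simp
qed

lemma Oid_ideal: "is_ideal_CX X (Oid X V)"
  unfolding is_ideal_CX_def Oid_def CX_def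
  apply (intro conjI)
  apply auto[2]
  apply (auto intro!: continuous_map_add continuous_map_real_mult)
  apply (metis add.right_neutral)+
  done

lemma Oid_coz_sub: "coz (Oid X V) \<subseteq> V"
  unfolding coz_def Oid_def by auto

lemma Oid_coz:
  assumes cr: "completely_regular_space X" and V: "openin X V"
  shows "coz (Oid X V) = V"
proof
  show "V \<subseteq> coz (Oid X V)"
  proof
    fix p assume p: "p \<in> V"
    have "closedin X (topspace X - V)" using V by auto
    moreover have "p \<in> topspace X - (topspace X - V)" using p openin_subset[OF V] by auto
    ultimately obtain f :: "'a \<Rightarrow> real" where f: "continuous_map X (top_of_set {0..1}) f" "f p = 0"
        "f ` (topspace X - V) \<subseteq> {1}"
      using cr unfolding completely_regular_space_def by meson
    define g where "g = (\<lambda>x. if x \<in> topspace X then 1 - f x else 0)"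
    have "continuous_map X euclideanreal (\<lambda>x. 1 - f x)"
      using f(1) by (intro continuous_intros) (simp add: continuous_map_in_subtopology)
    then have "continuous_map X euclideanreal g"
      by (rule continuous_map_eq) (simp add: g_def)
    moreover have "g x \<noteq> 0 \<Longrightarrow> x \<in> V" for x using f(3) by (auto simp: g_def image_subset_iff split: if_splits)
    moreover have "g p \<noteq> 0" using f(2) p openin_subset[OF V] by (auto simp: g_def)
    ultimately show "p \<in> coz (Oid X V)"
      unfolding coz_def Oid_def CX_def by (auto simp: g_def)
  qed
qed (rule Oid_coz_sub)


lemma AX_D:
  assumes "I \<in> AX X"
  shows "is_ideal_CX X I" "coz I \<noteq> {}"
    "\<exists>J. is_ideal_CX X J \<and> coz J \<noteq> {} \<and> coz I \<inter> coz J = {}"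
  using assms unfolding AX_def nonzero_iff prod_zero_iff by auto

lemma adj_intro:
  assumes "is_ideal_CX X I" "is_ideal_CX X J" "coz I \<noteq> {}" "coz J \<noteq> {}" "coz I \<inter> coz J = {}"
  shows "AG_adj X I J"
proof -
  have "I \<noteq> J" using assms by auto
  moreover have "I \<in> AX X" "J \<in> AX X"
    using assms unfolding AX_def nonzero_iff prod_zero_iff by (auto simp: Int_commute)
  ultimately show ?thesis unfolding AG_adj_def prod_zero_iff using assms by auto
qed

lemma adj_D: "AG_adj X I J \<Longrightarrow> coz I \<inter> coz J = {}"
  unfolding AG_adj_def prod_zero_iff by auto

lemma ideal_sub: "is_ideal_CX X I \<Longrightarrow> I \<subseteq> CX X"
  unfolding is_ideal_CX_def by (elim conjE)

lemma ideal_coz_open: "is_ideal_CX X I \<Longrightarrow> openin X (coz I)"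
  by (rule coz_open[OF ideal_sub])

lemma ideal_coz_sub: "is_ideal_CX X I \<Longrightarrow> coz I \<subseteq> topspace X"
  by (rule coz_sub[OF ideal_sub])

lemma AX_iff:
  assumes cr: "completely_regular_space X"
  shows "I \<in> AX X \<longleftrightarrow> is_ideal_CX X I \<and> coz I \<noteq> {} \<and> X closure_of (coz I) \<noteq> topspace X"
proof
  assume h: "I \<in> AX X"
  from AX_D(3)[OF h] obtain J where J: "is_ideal_CX X J" "coz J \<noteq> {}" "coz I \<inter> coz J = {}"
    by blast
  have oJ: "openin X (coz J)" using ideal_coz_open[OF J(1)] .
  have "coz J \<inter> X closure_of (coz I) = {}"
    using openin_Int_closure_of_eq_empty[OF oJ, of "coz I"] J(3) by (simp add: Int_commute)
  moreover have "coz J \<subseteq> topspace X" using ideal_coz_sub[OF J(1)] .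
  ultimately have "X closure_of (coz I) \<noteq> topspace X" using J(2) by blast
  then show "is_ideal_CX X I \<and> coz I \<noteq> {} \<and> X closure_of (coz I) \<noteq> topspace X"
    using AX_D(1,2)[OF h] by simp
next
  assume h: "is_ideal_CX X I \<and> coz I \<noteq> {} \<and> X closure_of (coz I) \<noteq> topspace X"
  define V where "V = topspace X - X closure_of (coz I)"
  have oV: "openin X V" unfolding V_def by (simp add: openin_diff)
  have cV: "coz (Oid X V) = V" using Oid_coz[OF cr oV] .
  have sub: "X closure_of (coz I) \<subseteq> topspace X" by (rule closure_of_subset_topspace)
  have "V \<noteq> {}" unfolding V_def using h sub by blast
  moreover have "coz I \<subseteq> X closure_of (coz I)"
    using closure_of_subset[OF ideal_coz_sub] h by blast
  then have "coz I \<inter> V = {}" unfolding V_def by blast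
  ultimately have "AG_adj X I (Oid X V)"
    using h cV Oid_ideal[of X V] adj_intro[of X I "Oid X V"] by simp
  then show "I \<in> AX X" unfolding AG_adj_def by blast
qed

lemma separate:
  assumes "tychonoff_space X" "p \<in> topspace X" "q \<in> topspace X" "p \<noteq> q"
  shows "\<exists>W. openin X W \<and> p \<in> W \<and> q \<notin> X closure_of W"
proof -
  have r: "regular_space X" using completely_regular_imp_regular_space[OF ty_cr[OF assms(1)]] .
  have "closedin X {q}" using closedin_t1_singleton[OF ty_t1[OF assms(1)] assms(3)] .
  moreover have "p \<in> topspace X - {q}" using assms by simp
  ultimately have c: "closedin X {q} \<and> p \<in> topspace X - {q}" by (rule conjI)
  have "\<exists>U V. openin X U \<and> openin X V \<and> p \<in> U \<and> {q} \<subseteq> V \<and> disjnt U V"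
    using r[unfolded regular_space_def, rule_format, OF c] .
  then obtain U V where UV: "openin X U" "openin X V" "p \<in> U" "{q} \<subseteq> V" "disjnt U V"
    by blast
  have "V \<inter> U = {}" using UV(5) unfolding disjnt_def by (simp add: Int_commute)
  then have "V \<inter> X closure_of U = {}" using openin_Int_closure_of_eq_empty[OF UV(2), of U] by simp
  then have "q \<notin> X closure_of U" using UV(4) by blast
  then show ?thesis using UV(1,3) by blast
qed

lemma dist_le:
  assumes "p 0 = I" "p n = J" "\<forall>i<n. AG_adj X (p i) (p (Suc i))"
  shows "AG_dist X I J \<le> enat n"
  unfolding AG_dist_def using assms by (intro Inf_lower) blast

lemma dist_0: "AG_dist X I I \<le> 0"
  using dist_le[of "\<lambda>i. I" I 0 I X] by (simp add: zero_enat_def)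

lemma dist_1: "AG_adj X I J \<Longrightarrow> AG_dist X I J \<le> 1"
  using dist_le[of "\<lambda>i. if i = 0 then I else J" I 1 J X] by (simp add: one_enat_def)

lemma dist_2: "AG_adj X I K \<Longrightarrow> AG_adj X K J \<Longrightarrow> AG_dist X I J \<le> 2"
proof -
  assume a: "AG_adj X I K" "AG_adj X K J"
  have "\<forall>i<2. AG_adj X ((\<lambda>i. if i = 0 then I else if i = 1 then K else J) i)
     ((\<lambda>i. if i = 0 then I else if i = 1 then K else J) (Suc i))"
    using a by (auto simp: less_Suc_eq numeral_2_eq_2)
  from dist_le[OF _ _ this] show ?thesis by (simp add: numeral_eq_enat)
qed

lemma dist_3: "AG_adj X I K \<Longrightarrow> AG_adj X K L \<Longrightarrow> AG_adj X L J \<Longrightarrow> AG_dist X I J \<le> 3"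
proof -
  assume a: "AG_adj X I K" "AG_adj X K L" "AG_adj X L J"
  have "\<forall>i<3. AG_adj X ((\<lambda>i. if i = 0 then I else if i = 1 then K else if i = 2 then L else J) i)
     ((\<lambda>i. if i = 0 then I else if i = 1 then K else if i = 2 then L else J) (Suc i))"
    using a by (auto simp: less_Suc_eq numeral_3_eq_3 numeral_2_eq_2)
  from dist_le[OF _ _ this] show ?thesis by (simp add: numeral_eq_enat)
qed

lemma dist_ge:
  assumes "\<And>n p. p 0 = I \<Longrightarrow> p n = J \<Longrightarrow> \<forall>i<n. AG_adj X (p i) (p (Suc i)) \<Longrightarrow> k \<le> n"
  shows "enat k \<le> AG_dist X I J"
  unfolding AG_dist_def using assms by (auto intro!: Inf_greatest)

lemma dist_ge1: "I \<noteq> J \<Longrightarrow> 1 \<le> AG_dist X I J"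
proof -
  assume a: "I \<noteq> J"
  have "enat 1 \<le> AG_dist X I J"
  proof (rule dist_ge)
    fix n and p :: "nat \<Rightarrow> _" assume "p 0 = I" "p n = J"
    then show "1 \<le> n" using a by (cases n) auto
  qed
  then show ?thesis by (simp add: one_enat_def)
qed

lemma dist_ge2: "I \<noteq> J \<Longrightarrow> \<not> AG_adj X I J \<Longrightarrow> 2 \<le> AG_dist X I J"
proof -
  assume a: "I \<noteq> J" "\<not> AG_adj X I J"
  have "enat 2 \<le> AG_dist X I J"
  proof (rule dist_ge)
    fix n and p :: "nat \<Rightarrow> _" assume h: "p 0 = I" "p n = J" "\<forall>i<n. AG_adj X (p i) (p (Suc i))"
    show "2 \<le> n"
    proof (rule ccontr)
      assume "\<not> 2 \<le> n"
      then have "n = 0 \<or> n = 1" by auto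
      then show False using h a by auto
    qed
  qed
  then show ?thesis by (simp add: numeral_eq_enat)
qed

lemma dist_ge3: "I \<noteq> J \<Longrightarrow> \<not> AG_adj X I J \<Longrightarrow> (\<And>K. AG_adj X I K \<Longrightarrow> AG_adj X K J \<Longrightarrow> False)
   \<Longrightarrow> 3 \<le> AG_dist X I J"
proof -
  assume a: "I \<noteq> J" "\<not> AG_adj X I J" "\<And>K. AG_adj X I K \<Longrightarrow> AG_adj X K J \<Longrightarrow> False"
  have "enat 3 \<le> AG_dist X I J"
  proof (rule dist_ge)
    fix n and p :: "nat \<Rightarrow> _" assume h: "p 0 = I" "p n = J" "\<forall>i<n. AG_adj X (p i) (p (Suc i))"
    show "3 \<le> n"
    proof (rule ccontr)
      assume "\<not> 3 \<le> n"
      then have "n = 0 \<or> n = 1 \<or> n = 2" by auto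
      then show False
      proof (elim disjE)
        assume "n = 2" then show False using h a(3)[of "p 1"] by (auto simp: numeral_2_eq_2)
      qed (use h a in auto)
    qed
  qed
  then show ?thesis by (simp add: numeral_eq_enat)
qed



lemma ecc_le: "(\<And>J. J \<in> AX X \<Longrightarrow> AG_dist X I J \<le> k) \<Longrightarrow> AG_ecc X I \<le> k"
  unfolding AG_ecc_def by (simp add: SUP_le_iff)

lemma ecc_ge: "J \<in> AX X \<Longrightarrow> k \<le> AG_dist X I J \<Longrightarrow> k \<le> AG_ecc X I"
  unfolding AG_ecc_def by (rule SUP_upper2)

lemma rad_eq: "I0 \<in> AX X \<Longrightarrow> AG_ecc X I0 \<le> k \<Longrightarrow> (\<And>I. I \<in> AX X \<Longrightarrow> k \<le> AG_ecc X I) \<Longrightarrow> AG_rad X = k"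
  unfolding AG_rad_def by (rule antisym) (auto intro: INF_lower2 INF_greatest)

lemma ecc_ge1: assumes "I \<in> AX X" shows "1 \<le> AG_ecc X I"
proof -
  obtain J where J: "is_ideal_CX X J" "coz J \<noteq> {}" "coz I \<inter> coz J = {}" using AX_D[OF assms] by blast
  have "AG_adj X I J" using J AX_D[OF assms] by (intro adj_intro) auto
  then have "J \<in> AX X" "I \<noteq> J" unfolding AG_adj_def by auto
  then show ?thesis using dist_ge1[of I J X] ecc_ge[of J X 1 I] by auto
qed

lemma AX_E:
  assumes cr: "completely_regular_space X" and "I \<in> AX X"
  shows "is_ideal_CX X I" "coz I \<noteq> {}" "X closure_of (coz I) \<noteq> topspace X"
proof -
  have "is_ideal_CX X I \<and> coz I \<noteq> {} \<and> X closure_of (coz I) \<noteq> topspace X"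
    using AX_iff[OF cr, of I] assms(2) by simp
  then show "is_ideal_CX X I" "coz I \<noteq> {}" "X closure_of (coz I) \<noteq> topspace X" by simp_all
qed

lemma ecc_le3:
  assumes cr: "completely_regular_space X" and I: "I \<in> AX X"
  shows "AG_ecc X I \<le> 3"
proof (rule ecc_le)
  fix J assume J: "J \<in> AX X"
  define A where "A = topspace X - X closure_of (coz I)"
  define B where "B = topspace X - X closure_of (coz J)"
  have oA: "openin X A" unfolding A_def by (simp add: openin_diff)
  have oB: "openin X B" unfolding B_def by (simp add: openin_diff)
  have cA: "coz (Oid X A) = A" using Oid_coz[OF cr oA] .
  have cB: "coz (Oid X B) = B" using Oid_coz[OF cr oB] .
  note iI = AX_E[OF cr I]
  note iJ = AX_E[OF cr J]
  have neA: "A \<noteq> {}" unfolding A_def using iI(3) closure_of_subset_topspace[of X "coz I"] by blast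
  have neB: "B \<noteq> {}" unfolding B_def using iJ(3) closure_of_subset_topspace[of X "coz J"] by blast
  have dI: "coz I \<inter> A = {}" unfolding A_def using closure_of_subset[OF ideal_coz_sub[OF iI(1)]] by blast
  have dJ: "B \<inter> coz J = {}" unfolding B_def using closure_of_subset[OF ideal_coz_sub[OF iJ(1)]] by blast
  have ocA: "coz (Oid X A) \<noteq> {}" using cA neA by simp
  have ocB: "coz (Oid X B) \<noteq> {}" using cB neB by simp
  show "AG_dist X I J \<le> 3"
  proof (cases "A \<inter> B = {}")
    case True
    have "AG_adj X I (Oid X A)" using adj_intro[OF iI(1) Oid_ideal iI(2) ocA] dI cA by simp
    moreover have "AG_adj X (Oid X A) (Oid X B)" using adj_intro[OF Oid_ideal Oid_ideal ocA ocB] True cA cB by simp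
    moreover have "AG_adj X (Oid X B) J" using adj_intro[OF Oid_ideal iJ(1) ocB iJ(2)] dJ cB by simp
    ultimately show ?thesis by (rule dist_3)
  next
    case False
    have oAB: "openin X (A \<inter> B)" using oA oB by (rule openin_Int)
    have c: "coz (Oid X (A \<inter> B)) = A \<inter> B" using Oid_coz[OF cr oAB] .
    have oc: "coz (Oid X (A \<inter> B)) \<noteq> {}" using c False by simp
    have "AG_adj X I (Oid X (A \<inter> B))" using adj_intro[OF iI(1) Oid_ideal iI(2) oc] c dI by blast
    moreover have "AG_adj X (Oid X (A \<inter> B)) J" using adj_intro[OF Oid_ideal iJ(1) oc iJ(2)] c dJ by blast
    ultimately have "AG_dist X I J \<le> 2" by (rule dist_2)
    moreover have "(2::enat) \<le> 3" by (simp add: numeral_eq_enat)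
    ultimately show ?thesis by (rule order_trans)
  qed
qed

lemma P_coz:
  assumes ty: "tychonoff_space X" and x: "openin X {x}"
  shows "coz (Oid X {x}) = {x}"
  using Oid_coz[OF ty_cr[OF ty] x] .

lemma ideal_mult: "is_ideal_CX X I \<Longrightarrow> f \<in> I \<Longrightarrow> h \<in> CX X \<Longrightarrow> (\<lambda>x. h x * f x) \<in> I"
  unfolding is_ideal_CX_def by (elim conjE) blast

lemma P_AX:
  assumes ty: "tychonoff_space X" and x: "openin X {x}" and y: "y \<in> topspace X" "y \<noteq> x"
  shows "Oid X {x} \<in> AX X"
proof -
  have xt: "x \<in> topspace X" using openin_subset[OF x] by simp
  have "X closure_of {x} = {x}" using closure_of_closedin[OF closedin_t1_singleton[OF ty_t1[OF ty] xt]] .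
  then have "X closure_of (coz (Oid X {x})) \<noteq> topspace X" using P_coz[OF ty x] y by auto
  moreover have "coz (Oid X {x}) \<noteq> {}" using P_coz[OF ty x] by simp
  ultimately show ?thesis using AX_iff[OF ty_cr[OF ty], of "Oid X {x}"] Oid_ideal[of X "{x}"] by simp
qed

lemma ecc_P_le2:
  assumes ty: "tychonoff_space X" and x: "openin X {x}"
  shows "AG_ecc X (Oid X {x}) \<le> 2"
proof (rule ecc_le)
  fix J assume J: "J \<in> AX X"
  have cP: "coz (Oid X {x}) = {x}" using P_coz[OF ty x] .
  have cP': "coz (Oid X {x}) \<noteq> {}" using cP by simp
  show "AG_dist X (Oid X {x}) J \<le> 2"
  proof (cases "x \<in> coz J")
    case False
    have "coz (Oid X {x}) \<inter> coz J = {}" using cP False by simp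
    then have "AG_adj X (Oid X {x}) J" using adj_intro[OF Oid_ideal AX_D(1)[OF J] cP' AX_D(2)[OF J]] by simp
    then have "AG_dist X (Oid X {x}) J \<le> 1" by (rule dist_1)
    moreover have "(1::enat) \<le> 2" by (simp add: numeral_eq_enat one_enat_def)
    ultimately show ?thesis by (rule order_trans)
  next
    case True
    obtain K where K: "is_ideal_CX X K" "coz K \<noteq> {}" "coz J \<inter> coz K = {}" using AX_D(3)[OF J] by blast
    have "x \<notin> coz K" using True K(3) by blast
    then have "coz (Oid X {x}) \<inter> coz K = {}" unfolding cP by simp
    then have "AG_adj X (Oid X {x}) K" using adj_intro[OF Oid_ideal K(1) cP' K(2)] by simp
    moreover have "coz K \<inter> coz J = {}" using K(3) by blast
    then have "AG_adj X K J" using adj_intro[OF K(1) AX_D(1)[OF J] K(2) AX_D(2)[OF J]] by simp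
    ultimately show ?thesis by (rule dist_2)
  qed
qed

lemma P_unique:
  assumes ty: "tychonoff_space X" and x: "openin X {x}" and J: "is_ideal_CX X J"
    and c: "x \<in> coz J" "coz J \<subseteq> {x}"
  shows "J = Oid X {x}"
proof
  show "J \<subseteq> Oid X {x}"
  proof
    fix f assume f: "f \<in> J"
    have "f \<in> CX X" using ideal_sub[OF J] f by blast
    moreover have "\<forall>y. f y \<noteq> 0 \<longrightarrow> y \<in> {x}" using c(2) f unfolding coz_def by blast
    ultimately show "f \<in> Oid X {x}" unfolding Oid_def by simp
  qed
next
  show "Oid X {x} \<subseteq> J"
  proof
    fix g assume g: "g \<in> Oid X {x}"
    have gz: "\<forall>y. g y \<noteq> 0 \<longrightarrow> y \<in> {x}" using g unfolding Oid_def by simp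
    obtain f where f: "f \<in> J" "f x \<noteq> 0" using c(1) unfolding coz_def by blast
    define h where "h = (\<lambda>y. if y = x then g x / f x else 0)"
    have xt: "x \<in> topspace X" using openin_subset[OF x] by simp
    have cl: "closedin X {x}" using closedin_t1_singleton[OF ty_t1[OF ty] xt] .
    have oc: "openin X (topspace X - {x})" using cl by (simp add: openin_diff)
    have "continuous_map X euclideanreal h"
      unfolding continuous_map_def
    proof (intro conjI allI impI)
      show "h \<in> topspace X \<rightarrow> topspace euclideanreal" by simp
      fix U :: "real set" 
      have eq: "{y \<in> topspace X. h y \<in> U} = (if g x / f x \<in> U then {x} else {}) \<union>
              (if (0::real) \<in> U then topspace X - {x} else {})"
        using xt unfolding h_def by auto
      have "openin X ((if g x / f x \<in> U then {x} else {}) \<union>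
              (if (0::real) \<in> U then topspace X - {x} else {}))"
        using x oc by (intro openin_Un) simp_all
      then show "openin X {y \<in> topspace X. h y \<in> U}" using eq by simp
    qed
    moreover have "\<forall>y. y \<notin> topspace X \<longrightarrow> h y = 0" using xt unfolding h_def by auto
    ultimately have hC: "h \<in> CX X" unfolding CX_def by simp
    have "(\<lambda>y. h y * f y) \<in> J" using ideal_mult[OF J f(1) hC] .
    moreover have "(\<lambda>y. h y * f y) = g"
    proof
      fix y show "h y * f y = g y"
      proof (cases "y = x")
        case True then show ?thesis using f(2) unfolding h_def by simp
      next
        case False then show ?thesis using gz unfolding h_def by auto
      qed
    qed
    ultimately show "g \<in> J" by simp
  qed
qed

lemma closure_mono_ne:
  "X closure_of S \<noteq> topspace X \<Longrightarrow> T \<subseteq> S \<Longrightarrow> X closure_of T \<noteq> topspace X"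
  using closure_of_mono[of T S X] closure_of_subset_topspace[of X S] by blast

lemma ecc_ge2:
  assumes ty: "tychonoff_space X" and I: "I \<in> AX X"
    and three: "\<And>u. u \<in> topspace X \<Longrightarrow> \<exists>c d. c \<in> topspace X \<and> d \<in> topspace X \<and> c \<noteq> u \<and> d \<noteq> u \<and> c \<noteq> d"
  shows "2 \<le> AG_ecc X I"
proof -
  have cr: "completely_regular_space X" using ty_cr[OF ty] .
  note iI = AX_E[OF cr I]
  have oU: "openin X (coz I)" using ideal_coz_open[OF iI(1)] .
  have Ut: "coz I \<subseteq> topspace X" using ideal_coz_sub[OF iI(1)] .
  obtain a where a: "a \<in> coz I" using iI(2) by blast
  obtain V where V: "openin X V" "a \<in> V" "V \<noteq> coz I" "X closure_of V \<noteq> topspace X"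
  proof (cases "\<exists>b\<in>coz I. b \<noteq> a")
    case True
    then obtain b where b: "b \<in> coz I" "b \<noteq> a" by blast
    have at: "a \<in> topspace X" "b \<in> topspace X" using a b Ut by (simp_all add: subset_iff)
    obtain W where W: "openin X W" "a \<in> W" "b \<notin> X closure_of W"
      using separate[OF ty at b(2)[symmetric]] by blast
    have bW: "b \<notin> W" using W(3) closure_of_subset[OF openin_subset[OF W(1)]] by blast
    have o: "openin X (coz I \<inter> W)" using oU W(1) by (rule openin_Int)
    have aa: "a \<in> coz I \<inter> W" using a W(2) by simp
    have ne: "coz I \<inter> W \<noteq> coz I" using b(1) bW by blast
    have cl: "X closure_of (coz I \<inter> W) \<noteq> topspace X" using closure_mono_ne[OF iI(3)] by simp
    show ?thesis using that[OF o aa ne cl] .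
  next
    case False
    then have U: "coz I = {a}" using a by blast
    have at: "a \<in> topspace X" using a Ut by (simp add: subset_iff)
    obtain c d where cd: "c \<in> topspace X" "d \<in> topspace X" "c \<noteq> a" "d \<noteq> a" "c \<noteq> d"
      using three[OF at] by blast
    obtain W where W: "openin X W" "c \<in> W" "d \<notin> X closure_of W"
      using separate[OF ty cd(1,2,5)] by blast
    have ca: "X closure_of {a} = {a}" using closure_of_closedin[OF closedin_t1_singleton[OF ty_t1[OF ty] at]] .
    have "X closure_of ({a} \<union> W) = {a} \<union> X closure_of W" by (simp only: closure_of_Un ca)
    then have "d \<notin> X closure_of ({a} \<union> W)" using W(3) cd(4) by simp
    then have cl: "X closure_of ({a} \<union> W) \<noteq> topspace X" using cd(2) by blast
    have o: "openin X ({a} \<union> W)" using oU W(1) unfolding U by (rule openin_Un)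
    have aa: "a \<in> {a} \<union> W" by simp
    have ne: "{a} \<union> W \<noteq> coz I" unfolding U using W(2) cd(3) by blast
    show ?thesis using that[OF o aa ne cl] .
  qed
  define J where "J = Oid X V"
  have cJ: "coz J = V" unfolding J_def using Oid_coz[OF cr V(1)] .
  have iJ: "is_ideal_CX X J" unfolding J_def by (rule Oid_ideal)
  have "V \<noteq> {}" using V(2) by blast
  then have J: "J \<in> AX X" using AX_iff[OF cr, of J] iJ cJ V(4) by simp
  have "I \<noteq> J" using cJ V(3) by auto
  moreover have "\<not> AG_adj X I J"
  proof
    assume "AG_adj X I J"
    then have "coz I \<inter> coz J = {}" by (rule adj_D)
    then show False using a V(2) unfolding cJ by blast
  qed
  ultimately have "2 \<le> AG_dist X I J" by (rule dist_ge2)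
  then show ?thesis by (rule ecc_ge[OF J])
qed

lemma ecc_ge3:
  assumes ty: "tychonoff_space X" and I: "I \<in> AX X"
    and noiso: "\<nexists>x. x \<in> topspace X \<and> openin X {x}"
  shows "3 \<le> AG_ecc X I"
proof -
  have cr: "completely_regular_space X" using ty_cr[OF ty] .
  note iI = AX_E[OF cr I]
  have oU: "openin X (coz I)" using ideal_coz_open[OF iI(1)] .
  have Ut: "coz I \<subseteq> topspace X" using ideal_coz_sub[OF iI(1)] .
  obtain a where a: "a \<in> coz I" using iI(2) by blast
  have at: "a \<in> topspace X" using a Ut by (simp add: subset_iff)
  have "\<exists>b\<in>coz I. b \<noteq> a"
  proof (rule ccontr)
    assume "\<not> ?thesis"
    then have "coz I = {a}" using a by blast
    then have "openin X {a}" using oU by simp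
    then show False using noiso at by blast
  qed
  then obtain b where b: "b \<in> coz I" "b \<noteq> a" by blast
  have bt: "b \<in> topspace X" using b Ut by (simp add: subset_iff)
  obtain W0 where W0: "openin X W0" "a \<in> W0" "b \<notin> X closure_of W0"
    using separate[OF ty at bt b(2)[symmetric]] by blast
  define W where "W = coz I \<inter> W0"
  have oW: "openin X W" unfolding W_def using oU W0(1) by (rule openin_Int)
  have aW: "a \<in> W" unfolding W_def using a W0(2) by simp
  have Wt: "W \<subseteq> topspace X" using openin_subset[OF oW] .
  have WcW: "W \<subseteq> X closure_of W" using closure_of_subset[OF Wt] .
  define V where "V = topspace X - X closure_of W"
  have oV: "openin X V" unfolding V_def by (simp add: openin_diff)
  have "X closure_of W \<subseteq> X closure_of W0" unfolding W_def by (rule closure_of_mono) simp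
  then have bV: "b \<in> V" unfolding V_def using W0(3) bt by blast
  have aV: "a \<notin> V" unfolding V_def using WcW aW by blast
  have "W \<inter> V = {}" unfolding V_def using WcW by blast
  then have WV: "W \<inter> X closure_of V = {}" using openin_Int_closure_of_eq_empty[OF oW, of V] by simp
  have aclV: "a \<notin> X closure_of V" using WV aW by blast
  define J where "J = Oid X V"
  have cJ: "coz J = V" unfolding J_def using Oid_coz[OF cr oV] .
  have iJ: "is_ideal_CX X J" unfolding J_def by (rule Oid_ideal)
  have "V \<noteq> {}" using bV by blast
  moreover have "X closure_of V \<noteq> topspace X" using aclV at by blast
  ultimately have J: "J \<in> AX X" using AX_iff[OF cr, of J] iJ cJ by simp
  have ne: "I \<noteq> J"
  proof
    assume "I = J"
    then have "coz I = V" using cJ by simp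
    then show False using a aV by simp
  qed
  have na: "\<not> AG_adj X I J"
  proof
    assume "AG_adj X I J"
    then have "coz I \<inter> coz J = {}" by (rule adj_D)
    then show False using b(1) bV unfolding cJ by blast
  qed
  have nk: "False" if K1: "AG_adj X I K" and K2: "AG_adj X K J" for K
  proof -
    have K: "K \<in> AX X" using K1 unfolding AG_adj_def by simp
    have iK: "is_ideal_CX X K" "coz K \<noteq> {}" using AX_D(1,2)[OF K] by simp_all
    have oK: "openin X (coz K)" using ideal_coz_open[OF iK(1)] .
    have Kt: "coz K \<subseteq> topspace X" using ideal_coz_sub[OF iK(1)] .
    have "coz I \<inter> coz K = {}" using K1 by (rule adj_D)
    then have "coz K \<inter> W = {}" unfolding W_def by blast
    then have c1: "coz K \<inter> X closure_of W = {}" using openin_Int_closure_of_eq_empty[OF oK, of W] by simp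
    have "coz K \<inter> coz J = {}" using K2 by (rule adj_D)
    then have c2: "coz K \<inter> V = {}" unfolding cJ .
    have "coz K = {}" using c1 c2 Kt unfolding V_def by blast
    then show False using iK(2) by simp
  qed
  have "3 \<le> AG_dist X I J"
  proof (rule dist_ge3[OF ne na])
    fix K assume "AG_adj X I K" "AG_adj X K J"
    then show False by (rule nk)
  qed
  then show ?thesis by (rule ecc_ge[OF J])
qed

lemma three_pts:
  assumes "infinite S \<or> card S > 2" "u \<in> S"
  shows "\<exists>c d. c \<in> S \<and> d \<in> S \<and> c \<noteq> u \<and> d \<noteq> u \<and> c \<noteq> d"
proof (rule ccontr)
  assume h: "\<not> ?thesis"
  have small: "False" if "S \<subseteq> {u, c}" for c
  proof -
    have f: "finite {u, c}" by simp
    have "card {u, c} \<le> 2" by (simp add: card_insert_le_m1)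
    moreover have "finite S" using finite_subset[OF that f] .
    moreover have "card S \<le> card {u, c}" using card_mono[OF f that] .
    ultimately show False using assms(1) by linarith
  qed
  show False
  proof (cases "S - {u} = {}")
    case True
    then have "S \<subseteq> {u, u}" by blast
    then show False by (rule small)
  next
    case False
    then obtain c where c: "c \<in> S" "c \<noteq> u" by blast
    have "S \<subseteq> {u, c}"
    proof
      fix d assume "d \<in> S"
      then show "d \<in> {u, c}" using h c by blast
    qed
    then show False by (rule small)
  qed
qed

theorem mainTheorem12:
  fixes X :: "'a topology"
  assumes "tychonoff_space X"
    and "\<exists>x\<in>topspace X. \<exists>y\<in>topspace X. x \<noteq> y"
  shows "(finite (topspace X) \<and> card (topspace X) = 2 \<longrightarrow> AG_rad X = 1)
    \<and> (infinite (topspace X) \<or> card (topspace X) > 2 \<longrightarrow>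
        ((\<exists>x\<in>topspace X. openin X {x}) \<longrightarrow> AG_rad X = 2) \<and>
        ((\<nexists>x. x \<in> topspace X \<and> openin X {x}) \<longrightarrow> AG_rad X = 3))"
proof -
  note ty = assms(1)
  have cr: "completely_regular_space X" using ty_cr[OF ty] .
  have t1: "t1_space X" using ty_t1[OF ty] .
  obtain a b where ab: "a \<in> topspace X" "b \<in> topspace X" "a \<noteq> b" using assms(2) by blast
  have part1: "AG_rad X = 1" if h: "finite (topspace X)" "card (topspace X) = 2"
  proof -
    have T: "topspace X = {a, b}"
    proof -
      have s: "{a, b} \<subseteq> topspace X" using ab by simp
      moreover have "card {a, b} = card (topspace X)" using ab h by simp
      ultimately show ?thesis using card_subset_eq[OF h(1) s] by simp
    qed
    have xa: "openin X {a}"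
    proof -
      have "{a} = topspace X - {b}" using T ab by auto
      then show ?thesis using closedin_t1_singleton[OF t1 ab(2)] by (simp add: openin_diff)
    qed
    have P: "Oid X {a} \<in> AX X" using P_AX[OF ty xa ab(2) ab(3)[symmetric]] .
    have cP: "coz (Oid X {a}) = {a}" using P_coz[OF ty xa] .
    have cP': "coz (Oid X {a}) \<noteq> {}" using cP by simp
    have "AG_ecc X (Oid X {a}) \<le> 1"
    proof (rule ecc_le)
      fix J assume J: "J \<in> AX X"
      note iJ = AX_E[OF cr J]
      have Jt: "coz J \<subseteq> topspace X" using ideal_coz_sub[OF iJ(1)] .
      have JtN: "coz J \<noteq> topspace X"
      proof
        assume "coz J = topspace X"
        then have "X closure_of (coz J) = topspace X" by simp
        then show False using iJ(3) by simp
      qed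
      show "AG_dist X (Oid X {a}) J \<le> 1"
      proof (cases "a \<in> coz J")
        case False
        have "coz (Oid X {a}) \<inter> coz J = {}" unfolding cP using False by simp
        then have "AG_adj X (Oid X {a}) J" using adj_intro[OF Oid_ideal iJ(1) cP' iJ(2)] by simp
        then show ?thesis by (rule dist_1)
      next
        case True
        have "b \<notin> coz J"
        proof
          assume "b \<in> coz J"
          then have "topspace X \<subseteq> coz J" using True unfolding T by simp
          then show False using Jt JtN by simp
        qed
        then have "coz J \<subseteq> {a}" using Jt unfolding T by blast
        then have "J = Oid X {a}" using P_unique[OF ty xa iJ(1) True] by simp
        then have "AG_dist X (Oid X {a}) J \<le> 0" using dist_0[of X J] by simp
        then show ?thesis by (rule order_trans) simp
      qed
    qed
    moreover have "\<And>I. I \<in> AX X \<Longrightarrow> 1 \<le> AG_ecc X I" by (rule ecc_ge1)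
    ultimately show ?thesis by (rule rad_eq[OF P])
  qed
  have part2: "AG_rad X = 2" if h: "infinite (topspace X) \<or> card (topspace X) > 2"
    and iso: "\<exists>x\<in>topspace X. openin X {x}"
  proof -
    obtain x where x: "x \<in> topspace X" "openin X {x}" using iso by blast
    obtain y where y: "y \<in> topspace X" "y \<noteq> x"
    proof (cases "a = x")
      case True then show ?thesis using that[of b] ab by simp
    next
      case False then show ?thesis using that[of a] ab by simp
    qed
    have P: "Oid X {x} \<in> AX X" using P_AX[OF ty x(2) y] .
    have "\<And>I. I \<in> AX X \<Longrightarrow> 2 \<le> AG_ecc X I"
    proof -
      fix I assume I: "I \<in> AX X"
      show "2 \<le> AG_ecc X I"
      proof (rule ecc_ge2[OF ty I])
        fix u assume "u \<in> topspace X"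
        then show "\<exists>c d. c \<in> topspace X \<and> d \<in> topspace X \<and> c \<noteq> u \<and> d \<noteq> u \<and> c \<noteq> d"
          by (rule three_pts[OF h])
      qed
    qed
    then show ?thesis by (rule rad_eq[OF P ecc_P_le2[OF ty x(2)]])
  qed
  have part3: "AG_rad X = 3" if h: "infinite (topspace X) \<or> card (topspace X) > 2"
    and noiso: "\<nexists>x. x \<in> topspace X \<and> openin X {x}"
  proof -
    obtain W where W: "openin X W" "a \<in> W" "b \<notin> X closure_of W"
      using separate[OF ty ab] by blast
    have cW: "coz (Oid X W) = W" using Oid_coz[OF cr W(1)] .
    have "W \<noteq> {}" using W(2) by blast
    moreover have "X closure_of W \<noteq> topspace X" using W(3) ab(2) by blast
    ultimately have I0: "Oid X W \<in> AX X"
      using AX_iff[OF cr, of "Oid X W"] Oid_ideal[of X W] cW by simp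
    have "\<And>I. I \<in> AX X \<Longrightarrow> 3 \<le> AG_ecc X I" using ecc_ge3[OF ty _ noiso] .
    then show ?thesis by (rule rad_eq[OF I0 ecc_le3[OF cr I0]])
  qed
  show ?thesis using part1 part2 part3 by blast
qed

end
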